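(* For every integer $n>2$ there exists a unique $\zeta_n>1$ such that the system $$P_n'(1-\varepsilon_{j+1})-P_n'(1-\varepsilon_j)=\varepsilon_{j+1}P_n'(1-\varepsilon_{j+1})+P_n(1-\varepsilon_{j+1})-\frac{j}{\zeta_n},\qquad j=1,\dots,n-1,$$ with initial condition $\varepsilon_1=1$ has a solution $(\varepsilon_j)_{j=1}^n$ satisfying $0\le\varepsilon_n<\dots<\varepsilon_2<\varepsilon_1=1$ and $$\zeta_n=\frac{n}{\varepsilon_nP_n'(1-\varepsilon_n)+P_n(1-\varepsilon_n)}.$$
   Context: $P_n(t)=\sum_{i=1}^nt^i$ and $P_n'(t)=\sum_{i=1}^n i\,t^{i-1}$. *)

theory Defs
  imports Complex_Main
begin

definition P :: "nat \<Rightarrow> real \<Rightarrow> real" where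
  "P n t = (\<Sum>i=1..n. t ^ i)"

definition P' :: "nat \<Rightarrow> real \<Rightarrow> real" where
  "P' n t = (\<Sum>i=1..n. real i * t ^ (i - 1))"

end

theory Submission imports Defs begin

definition g :: "nat \<Rightarrow> real \<Rightarrow> real" where "g n t = t * P' n t - P n t"
definition F :: "nat \<Rightarrow> real \<Rightarrow> real" where "F n t = (1 - t) * P' n t + P n t"

lemma P'_eq: "P' n t = g n t + F n t" by (simp add: g_def F_def algebra_simps)

lemma P'_mono: assumes "0 \<le> a" "a \<le> b" shows "P' n a \<le> P' n b"
  unfolding P'_def using assms by (intro sum_mono mult_left_mono power_mono) auto

lemma g_sum: "g n t = (\<Sum>i=1..n. (real i - 1) * t ^ i)"
proof -
  have "g n t = (\<Sum>i=1..n. t * (real i * t ^ (i - 1)) - t ^ i)"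
    unfolding g_def P_def P'_def by (simp add: sum_distrib_left sum_subtractf)
  also have "\<dots> = (\<Sum>i=1..n. (real i - 1) * t ^ i)"
  proof (rule sum.cong)
    fix i assume "i \<in> {1..n}"
    then obtain m where "i = Suc m" by (cases i) auto
    then show "t * (real i * t ^ (i - 1)) - t ^ i = (real i - 1) * t ^ i"
      by (simp add: algebra_simps)
  qed simp
  finally show ?thesis .
qed

lemma g_strict: assumes "2 \<le> n" "0 \<le> a" "a < b" shows "g n a < g n b"
  unfolding g_sum
proof (rule sum_strict_mono_ex1)
  show "\<forall>x\<in>{1..n}. (real x - 1) * a ^ x \<le> (real x - 1) * b ^ x"
    using assms by (auto intro!: mult_left_mono power_mono)
  have "(real 2 - 1) * a ^ 2 < (real 2 - 1) * b ^ 2"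
    using assms by (simp add: power_strict_mono)
  then show "\<exists>x\<in>{1..n}. (real x - 1) * a ^ x < (real x - 1) * b ^ x"
    using assms by (intro bexI[of _ 2]) auto
qed simp

lemma g_mono: assumes "2 \<le> n" "0 \<le> a" "a \<le> b" shows "g n a \<le> g n b"
  using g_strict[OF assms(1,2), of b] assms by (cases "a = b") auto

lemma g_0[simp]: "g n 0 = 0" unfolding g_sum by (simp add: power_0_left)

lemma g_nonneg: assumes "2 \<le> n" "0 \<le> t" shows "0 \<le> g n t"
  using g_mono[OF assms(1) _ assms(2)] by simp

lemma P'_0: assumes "1 \<le> n" shows "P' n 0 = 1"
proof -
  have "P' n 0 = (\<Sum>i\<in>{1..n}. if i = 1 then 1 else 0)"
    unfolding P'_def by (rule sum.cong) (auto simp: power_0_left)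
  then show ?thesis using assms by simp
qed

lemma P_0[simp]: "P n 0 = 0" unfolding P_def by (simp add: power_0_left)
lemma P_1[simp]: "P n 1 = real n" unfolding P_def by simp

lemma F_0: assumes "1 \<le> n" shows "F n 0 = 1" using P'_0[OF assms] by (simp add: F_def)
lemma F_1[simp]: "F n 1 = real n" by (simp add: F_def)

lemma conv_pow: assumes "0 \<le> a" "a \<le> b" shows "real i * a ^ (i - 1) * (b - a) \<le> b ^ i - a ^ i"
proof (cases i)
  case 0 then show ?thesis by simp
next
  case (Suc m)
  have "b ^ i - a ^ i = (b - a) * (\<Sum>k<i. a ^ (i - Suc k) * b ^ k)" by (rule power_diff_sumr2)
  moreover have "(\<Sum>k<i. a ^ m) \<le> (\<Sum>k<i. a ^ (i - Suc k) * b ^ k)"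
  proof (rule sum_mono)
    fix k assume "k \<in> {..<i}"
    then have "a ^ m = a ^ (i - Suc k) * a ^ k" using Suc by (simp add: power_add[symmetric])
    also have "\<dots> \<le> a ^ (i - Suc k) * b ^ k" using assms by (intro mult_left_mono power_mono) auto
    finally show "a ^ m \<le> a ^ (i - Suc k) * b ^ k" .
  qed
  ultimately show ?thesis using Suc assms
    by (simp add: mult.commute mult_left_mono)
qed

lemma P_conv: assumes "0 \<le> a" "a \<le> b" shows "P' n a * (b - a) \<le> P n b - P n a"
  unfolding P_def P'_def using conv_pow[OF assms]
  by (auto simp: sum_distrib_right sum_subtractf[symmetric] intro!: sum_mono)

lemma F_mono: assumes "0 \<le> a" "a \<le> b" "b \<le> 1" shows "F n a \<le> F n b"
proof -
  have "(1 - b) * (P' n b - P' n a) \<ge> 0" using P'_mono[OF assms(1,2)] assms by simp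
  then show ?thesis using P_conv[OF assms(1,2), of n] unfolding F_def by (simp add: algebra_simps)
qed

lemma cont_P': "continuous_on S (P' n)" unfolding P'_def by (intro continuous_intros)
lemma cont_P: "continuous_on S (P n)" unfolding P_def by (intro continuous_intros)
lemma cont_g: "continuous_on S (g n)" unfolding g_def by (intro continuous_intros cont_P cont_P')
lemma cont_F: "continuous_on S (F n)" unfolding F_def by (intro continuous_intros cont_P cont_P')


definition T :: "nat \<Rightarrow> real \<Rightarrow> real" where
  "T n y = inv_into {0..1} (g n) (max 0 (min (g n 1) y))"

lemma g_inj: assumes "2 \<le> n" shows "inj_on (g n) {0..1}"
proof (rule inj_onI)
  fix x y assume xy: "x \<in> {0..1}" "y \<in> {0..1}" "g n x = g n y"
  show "x = y"
  proof (rule ccontr)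
    assume "x \<noteq> y"
    then have "x < y \<or> y < x" by auto
    then show False using g_strict[OF assms] xy by (metis atLeastAtMost_iff less_irrefl)
  qed
qed

lemma g_img: assumes "2 \<le> n" shows "g n ` {0..1} = {0..g n 1}"
proof
  show "g n ` {0..1} \<subseteq> {0..g n 1}"
    using g_mono[OF assms] g_nonneg[OF assms] by auto
  show "{0..g n 1} \<subseteq> g n ` {0..1}"
  proof
    fix y assume "y \<in> {0..g n 1}"
    then have "g n 0 \<le> y" "y \<le> g n 1" by auto
    from IVT'[OF this _ cont_g] obtain x where "0 \<le> x" "x \<le> 1" "g n x = y" by auto
    then show "y \<in> g n ` {0..1}" by force
  qed
qed

lemma T_props: assumes "2 \<le> n"
  shows "0 \<le> T n y \<and> T n y \<le> 1 \<and> g n (T n y) = max 0 (min (g n 1) y)"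
proof -
  have g1: "0 \<le> g n 1" using g_nonneg[OF assms] by simp
  have "max 0 (min (g n 1) y) \<in> g n ` {0..1}" using g_img[OF assms] g1 by auto
  then show ?thesis unfolding T_def
    using inv_into_into[of _ "g n" "{0..1}"] f_inv_into_f[of _ "g n" "{0..1}"] by auto
qed

lemma T_g: assumes "2 \<le> n" "0 \<le> t" "t \<le> 1" shows "T n (g n t) = t"
proof -
  have "max 0 (min (g n 1) (g n t)) = g n t"
    using g_mono[OF assms(1)] g_nonneg[OF assms(1)] assms by auto
  then show ?thesis unfolding T_def using inv_into_f_f[OF g_inj[OF assms(1)]] assms by auto
qed

lemma T_mono: assumes "2 \<le> n" "y1 \<le> y2" shows "T n y1 \<le> T n y2"
proof (rule ccontr)
  assume "\<not> ?thesis"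
  then have "g n (T n y2) < g n (T n y1)" using g_strict[OF assms(1), of "T n y2" "T n y1"] T_props[OF assms(1), of y2] by simp
  then show False using T_props[OF assms(1), of y1] T_props[OF assms(1), of y2] assms(2) by auto
qed

lemma T_cont: assumes "2 \<le> n" shows "continuous_on UNIV (T n)"
proof -
  have c: "continuous_on (g n ` {0..1}) (inv_into {0..1} (g n))"
    by (rule continuous_on_inv[OF cont_g]) (auto intro: inv_into_f_f[OF g_inj[OF assms]])
  have g1: "0 \<le> g n 1" using g_nonneg[OF assms] by simp
  show ?thesis unfolding T_def
    by (rule continuous_on_compose2[OF c]) (auto intro!: continuous_intros simp: g_img[OF assms] g1)
qed

primrec u :: "nat \<Rightarrow> real \<Rightarrow> nat \<Rightarrow> real" where
  "u n s 0 = 0"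
| "u n s (Suc k) = T n (P' n (u n s k) - real (Suc k) * s)"

lemma u_range: assumes "2 \<le> n" shows "0 \<le> u n s k \<and> u n s k \<le> 1"
  using T_props[OF assms] by (cases k) auto

lemma u_cont: assumes "2 \<le> n" shows "continuous_on UNIV (\<lambda>s. u n s k)"
proof (induction k)
  case 0 then show ?case by simp
next
  case (Suc k)
  have "continuous_on UNIV (\<lambda>s. P' n (u n s k) - real (Suc k) * s)"
    by (intro continuous_intros continuous_on_compose2[OF cont_P' Suc]) auto
  then have "continuous_on UNIV (\<lambda>s. T n (P' n (u n s k) - real (Suc k) * s))"
    by (rule continuous_on_compose2[OF T_cont[OF assms]]) auto
  then show ?case by simp
qed

lemma u_one: assumes "2 \<le> n" shows "u n 1 k = 0"
proof (induction k)
  case (Suc k)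
  have "max 0 (min (g n 1) (1 - real (Suc k))) = g n 0" using g_nonneg[OF assms, of 1] by simp
  then show ?case using Suc P'_0[of n] assms T_g[OF assms, of 0] by (simp add: T_def)
qed simp


lemma dec_chain:
  fixes n i j :: nat and e :: "nat \<Rightarrow> real"
  assumes dec: "\<forall>j\<in>{1..n-1}. e (j+1) < (e j :: real)" and i1: "1 \<le> i"
  shows "i \<le> j \<Longrightarrow> j \<le> n \<Longrightarrow> e j \<le> e i"
proof (induction j)
  case 0 then show ?case using i1 by simp
next
  case (Suc j)
  show ?case
  proof (cases "i = Suc j")
    case False
    then have ij: "i \<le> j" using Suc.prems by simp
    then have "e j \<le> e i" using Suc by simp
    moreover have jj: "j \<in> {1..n-1}" using Suc.prems ij i1 by auto
    moreover have "e (Suc j) < e j" using dec jj by (metis Suc_eq_plus1)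
    ultimately show ?thesis by linarith
  qed simp
qed

lemma eq_to_g:
  assumes "P' n (1 - e (j+1)) - P' n (1 - e j) = e (j+1) * P' n (1 - e (j+1)) + P n (1 - e (j+1)) - real j / z"
  shows "g n (1 - e (j+1)) = P' n (1 - e j) - real j * (1/z)"
proof -
  have a: "(1 - e (j+1)) * P' n (1 - e (j+1)) = P' n (1 - e (j+1)) - e (j+1) * P' n (1 - e (j+1))"
    by (simp add: algebra_simps)
  have b: "real j / z = real j * (1/z)" by simp
  show ?thesis unfolding g_def using assms a b by linarith
qed

lemma uniq_core:
  fixes e e' :: "nat \<Rightarrow> real"
  assumes n: "2 \<le> n"
    and e1: "e 1 = 1" and eq: "\<forall>j\<in>{1..n-1}. g n (1 - e (j+1)) = P' n (1 - e j) - real j * s"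
    and en: "0 \<le> e n" and dec: "\<forall>j\<in>{1..n-1}. e (j+1) < e j"
    and fin: "F n (1 - e n) = real n * s"
    and e1': "e' 1 = 1" and eq': "\<forall>j\<in>{1..n-1}. g n (1 - e' (j+1)) = P' n (1 - e' j) - real j * s'"
    and en': "0 \<le> e' n" and dec': "\<forall>j\<in>{1..n-1}. e' (j+1) < e' j"
    and fin': "F n (1 - e' n) = real n * s'"
    and ss: "s < s'"
  shows False
proof -
  have bd: "0 \<le> e j \<and> e j \<le> 1" if "1 \<le> j" "j \<le> n" for j
  proof -
    have "e j \<le> e 1" by (rule dec_chain[OF dec]) (use that in simp_all)
    moreover have "e n \<le> e j" by (rule dec_chain[OF dec]) (use that in simp_all)
    ultimately show ?thesis using e1 en by linarith
  qed
  have bd': "0 \<le> e' j \<and> e' j \<le> 1" if "1 \<le> j" "j \<le> n" for j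
  proof -
    have "e' j \<le> e' 1" by (rule dec_chain[OF dec']) (use that in simp_all)
    moreover have "e' n \<le> e' j" by (rule dec_chain[OF dec']) (use that in simp_all)
    ultimately show ?thesis using e1' en' by linarith
  qed
  have main: "1 - e' j \<le> 1 - e j" if "1 \<le> j" "j \<le> n" for j
    using that
  proof (induction j)
    case 0 then show ?case by simp
  next
    case (Suc j)
    show ?case
    proof (cases "j = 0")
      case True then show ?thesis using e1 e1' by simp
    next
      case False
      then have j: "j \<in> {1..n-1}" using Suc by auto
      have ih: "1 - e' j \<le> 1 - e j" using Suc False by simp
      have "g n (1 - e' (Suc j)) = P' n (1 - e' j) - real j * s'" using eq' j by simp
      also have "\<dots> \<le> P' n (1 - e j) - real j * s"
      proof -
        have jn: "1 \<le> j" "j \<le> n" using j by auto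
        have "P' n (1 - e' j) \<le> P' n (1 - e j)" using P'_mono[OF _ ih, of n] bd'[OF jn] by simp
        moreover have "real j * s \<le> real j * s'" using ss by (intro mult_left_mono) auto
        ultimately show ?thesis by linarith
      qed
      also have "\<dots> = g n (1 - e (Suc j))" using eq j by simp
      finally have gg: "g n (1 - e' (Suc j)) \<le> g n (1 - e (Suc j))" .
      show ?thesis
      proof (rule ccontr)
        assume "\<not> ?thesis"
        moreover have "0 \<le> 1 - e (Suc j)" using bd[of "Suc j"] Suc.prems by simp
        ultimately have "g n (1 - e (Suc j)) < g n (1 - e' (Suc j))"
          using g_strict[OF n, of "1 - e (Suc j)" "1 - e' (Suc j)"] by simp
        then show False using gg by simp
      qed
    qed
  qed
  have m: "1 - e' n \<le> 1 - e n" using main[of n] n by simp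
  have "F n (1 - e' n) \<le> F n (1 - e n)"
    using F_mono[OF _ m] bd[of n] bd'[of n] n by simp
  then have "real n * s' \<le> real n * s" using fin fin' by simp
  then show False using ss n by simp
qed


definition Sol :: "nat \<Rightarrow> real \<Rightarrow> (nat \<Rightarrow> real) \<Rightarrow> bool" where
  "Sol n \<zeta> \<epsilon> \<longleftrightarrow>
       \<epsilon> 1 = 1 \<and>
       (\<forall>j\<in>{1..n-1}.
          P' n (1 - \<epsilon> (j+1)) - P' n (1 - \<epsilon> j)
            = \<epsilon> (j+1) * P' n (1 - \<epsilon> (j+1)) + P n (1 - \<epsilon> (j+1)) - real j / \<zeta>) \<and>
       0 \<le> \<epsilon> n \<and>
       (\<forall>j\<in>{1..n-1}. \<epsilon> (j+1) < \<epsilon> j) \<and>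
       \<zeta> = real n / (\<epsilon> n * P' n (1 - \<epsilon> n) + P n (1 - \<epsilon> n))"

lemma Sol_fin: assumes "Sol n z e" "z > 1" shows "F n (1 - e n) = real n * (1/z)"
proof -
  let ?X = "e n * P' n (1 - e n) + P n (1 - e n)"
  have z: "z = real n / ?X" using assms(1) unfolding Sol_def by blast
  have "?X \<noteq> 0" using z assms(2) by auto
  then have "?X = real n * (1/z)" using z assms(2) by (simp add: field_simps)
  then show ?thesis unfolding F_def by simp
qed

lemma uniq2: assumes n: "2 \<le> n" and S1: "Sol n z e" "z > 1" and S2: "Sol n z' e'" "z' > 1"
  and lt: "1/z < 1/z'" shows False
proof (rule uniq_core[OF n, of e "1/z" e' "1/z'"])
  show "e 1 = 1" "0 \<le> e n" "\<forall>j\<in>{1..n-1}. e (j+1) < e j" using S1 unfolding Sol_def by blast+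
  show "e' 1 = 1" "0 \<le> e' n" "\<forall>j\<in>{1..n-1}. e' (j+1) < e' j" using S2 unfolding Sol_def by blast+
  show "F n (1 - e n) = real n * (1/z)" by (rule Sol_fin[OF S1])
  show "F n (1 - e' n) = real n * (1/z')" by (rule Sol_fin[OF S2])
  show "\<forall>j\<in>{1..n-1}. g n (1 - e (j+1)) = P' n (1 - e j) - real j * (1/z)"
    using S1 unfolding Sol_def by (blast intro: eq_to_g)
  show "\<forall>j\<in>{1..n-1}. g n (1 - e' (j+1)) = P' n (1 - e' j) - real j * (1/z')"
    using S2 unfolding Sol_def by (blast intro: eq_to_g)
qed (rule lt)

lemma exist_s: assumes n: "2 \<le> n" shows "\<exists>s. 0 < s \<and> s < 1 \<and> F n (u n s (n-1)) = real n * s"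
proof -
  let ?D = "\<lambda>s. F n (u n s (n-1)) - real n * s"
  have "continuous_on UNIV (\<lambda>s. F n (u n s (n-1)))"
    by (rule continuous_on_compose2[OF cont_F u_cont[OF n]]) auto
  then have "continuous_on UNIV ?D" by (intro continuous_intros)
  then have c: "continuous_on {0..1} ?D" by (rule continuous_on_subset) auto
  have D1: "?D 1 = 1 - real n" using u_one[OF n] F_0[of n] n by simp
  have "F n 0 \<le> F n (u n 0 (n-1))" using F_mono[of 0 "u n 0 (n-1)" n] u_range[OF n] by simp
  then have D0: "?D 0 \<ge> 1" using F_0[of n] n by simp
  have "?D 1 \<le> 0" "0 \<le> ?D 0" using D1 D0 n by auto
  from IVT2'[OF this _ c] obtain s where s: "0 \<le> s" "s \<le> 1" "?D s = 0" by auto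
  have "s \<noteq> 0" using s D0 by auto
  moreover have "s \<noteq> 1" using s D1 n by auto
  ultimately show ?thesis using s by (intro exI[of _ s]) auto
qed


lemma sol_props:
  assumes n: "2 \<le> n" and s: "0 < s" "s < 1" and fin: "F n (u n s (n-1)) = real n * s"
  shows "u n s (n-1) < 1"
    and "\<And>k. Suc k \<le> n - 1 \<Longrightarrow> g n (u n s (Suc k)) = P' n (u n s k) - real (Suc k) * s \<and> u n s k < u n s (Suc k)"
proof -
  define t where "t = u n s"
  define d where "d k = F n (t k) - real (Suc k) * s" for k
  have rng: "0 \<le> t k" "t k \<le> 1" for k using u_range[OF n] unfolding t_def by auto
  have tS: "t (Suc k) = T n (P' n (t k) - real (Suc k) * s)" for k unfolding t_def by simp
  have yeq: "P' n (t k) - real (Suc k) * s = g n (t k) + d k" for k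
    unfolding d_def P'_eq by simp
  have step: "d (Suc k) < 0" if "d k \<le> 0" for k
  proof -
    have "t (Suc k) \<le> T n (g n (t k))" unfolding tS yeq using that by (intro T_mono[OF n]) simp
    then have "t (Suc k) \<le> t k" using T_g[OF n rng(1) rng(2)] by simp
    then have "F n (t (Suc k)) \<le> F n (t k)" using F_mono[OF rng(1) _ rng(2)] by simp
    then show ?thesis using that s unfolding d_def by (simp add: algebra_simps)
  qed
  have propag: "d m < 0" if "d k \<le> 0" "k < m" for k m
    using that(2)
  proof (induction m)
    case 0 then show ?case by simp
  next
    case (Suc m)
    show ?case
    proof (cases "k = m")
      case True then show ?thesis using step that(1) by simp
    next
      case False then have "d m < 0" using Suc by simp
      then show ?thesis using step by simp
    qed
  qed
  have dn: "d (n-1) = 0" using fin n unfolding d_def t_def by (simp add: Suc_diff_1 of_nat_diff)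
  have dpos: "d k > 0" if "k < n - 1" for k
  proof (rule ccontr)
    assume "\<not> ?thesis"
    then have "d k \<le> 0" by simp
    then have "d (n-1) < 0" using propag that by blast
    then show False using dn by simp
  qed
  have g1: "0 \<le> g n 1" using g_nonneg[OF n] by simp
  have top: "t (Suc k) = 1" if "g n 1 \<le> P' n (t k) - real (Suc k) * s" for k
  proof -
    have "max 0 (min (g n 1) (P' n (t k) - real (Suc k) * s)) = max 0 (min (g n 1) (g n 1))"
      using that by simp
    then have "t (Suc k) = T n (g n 1)" unfolding tS T_def by simp
    then show ?thesis using T_g[OF n] by simp
  qed
  have one_step: "t (Suc k) = 1" if "t k = 1" "Suc k \<le> n - 1" for k
  proof (rule top)
    have "real (Suc k) * s \<le> real (Suc k)" using s by simp
    also have "\<dots> \<le> real n" using that(2) by simp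
    finally show "g n 1 \<le> P' n (t k) - real (Suc k) * s"
      using that(1) P'_eq[of n 1] by simp
  qed
  have last: "t (n-1) < 1"
  proof (rule ccontr)
    assume "\<not> ?thesis"
    then have "t (n-1) = 1" using rng[of "n-1"] by simp
    then have "real n = real n * s" using fin unfolding t_def by simp
    then show False using s n by simp
  qed
  then show "u n s (n-1) < 1" unfolding t_def .
  have allless: "t k < 1" if "k \<le> n - 1" for k
  proof (rule ccontr)
    assume "\<not> ?thesis"
    then have tk: "t k = 1" using rng[of k] by simp
    have "t (k + m) = 1" if "k + m \<le> n - 1" for m
      using that
    proof (induction m)
      case 0 then show ?case using tk by simp
    next
      case (Suc m) then show ?case using one_step[of "k+m"] by simp
    qed
    moreover have "k + (n - 1 - k) = n - 1" using \<open>k \<le> n - 1\<close> by simp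
    ultimately have "t (n-1) = 1" by (metis order_refl)
    then show False using last by simp
  qed
  fix k assume k: "Suc k \<le> n - 1"
  let ?y = "P' n (t k) - real (Suc k) * s"
  have dk: "d k > 0" using dpos k by simp
  have y0: "0 \<le> ?y" using yeq[of k] dk g_nonneg[OF n rng(1)] by simp
  have y1: "?y \<le> g n 1"
  proof (rule ccontr)
    assume "\<not> ?thesis"
    then have "t (Suc k) = 1" using top by simp
    then show False using allless[OF k] by simp
  qed
  have geq: "g n (t (Suc k)) = ?y" using T_props[OF n, of ?y] y0 y1 unfolding tS by simp
  have "t k < t (Suc k)"
  proof (rule ccontr)
    assume "\<not> ?thesis"
    then have "g n (t (Suc k)) \<le> g n (t k)" using g_mono[OF n rng(1)] by simp
    then show False using geq yeq[of k] dk by simp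
  qed
  then show "g n (u n s (Suc k)) = P' n (u n s k) - real (Suc k) * s \<and> u n s k < u n s (Suc k)"
    using geq unfolding t_def by simp
qed

theorem mainTheorem8:
  fixes n :: nat
  assumes "n > 2"
  shows "\<exists>!\<zeta>::real. \<zeta> > 1 \<and>
    (\<exists>\<epsilon> :: nat \<Rightarrow> real.
       \<epsilon> 1 = 1 \<and>
       (\<forall>j\<in>{1..n-1}.
          P' n (1 - \<epsilon> (j+1)) - P' n (1 - \<epsilon> j)
            = \<epsilon> (j+1) * P' n (1 - \<epsilon> (j+1)) + P n (1 - \<epsilon> (j+1)) - real j / \<zeta>) \<and>
       0 \<le> \<epsilon> n \<and>
       (\<forall>j\<in>{1..n-1}. \<epsilon> (j+1) < \<epsilon> j) \<and>
       \<zeta> = real n / (\<epsilon> n * P' n (1 - \<epsilon> n) + P n (1 - \<epsilon> n)))"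
proof -
  have n: "2 \<le> n" using assms by simp
  obtain s where s: "0 < s" "s < 1" and fin: "F n (u n s (n-1)) = real n * s"
    using exist_s[OF n] by blast
  note sp = sol_props[OF n s fin]
  define e where "e j = 1 - u n s (j - 1)" for j
  have S: "Sol n (1/s) e"
    unfolding Sol_def
  proof (intro conjI ballI)
    show "e 1 = 1" unfolding e_def by simp
    show "0 \<le> e n" unfolding e_def using sp(1) n by simp
    fix j assume j: "j \<in> {1..n-1}"
    then obtain k where k: "j = Suc k" "Suc k \<le> n - 1" by (cases j) auto
    have r: "g n (u n s (Suc k)) = P' n (u n s k) - real (Suc k) * s" "u n s k < u n s (Suc k)"
      using sp(2)[OF k(2)] by auto
    show "e (j+1) < e j" unfolding e_def k using r(2) by simp
    have a: "(1 - u n s (Suc k)) * P' n (u n s (Suc k)) = P' n (u n s (Suc k)) - u n s (Suc k) * P' n (u n s (Suc k))"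
      by (simp add: algebra_simps)
    show "P' n (1 - e (j+1)) - P' n (1 - e j)
            = e (j+1) * P' n (1 - e (j+1)) + P n (1 - e (j+1)) - real j / (1/s)"
      unfolding e_def k using r(1) a unfolding g_def by simp
  next
    have "e n * P' n (1 - e n) + P n (1 - e n) = F n (u n s (n-1))"
      unfolding e_def F_def by simp
    then show "1/s = real n / (e n * P' n (1 - e n) + P n (1 - e n))"
      using fin n s by simp
  qed
  have s1: "1/s > 1" using s by simp
  show ?thesis
  proof (rule ex1I[where a="1/s"])
    show "1/s > 1 \<and> (\<exists>\<epsilon>. \<epsilon> 1 = 1 \<and>
       (\<forall>j\<in>{1..n-1}.
          P' n (1 - \<epsilon> (j+1)) - P' n (1 - \<epsilon> j)
            = \<epsilon> (j+1) * P' n (1 - \<epsilon> (j+1)) + P n (1 - \<epsilon> (j+1)) - real j / (1/s)) \<and>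
       0 \<le> \<epsilon> n \<and>
       (\<forall>j\<in>{1..n-1}. \<epsilon> (j+1) < \<epsilon> j) \<and>
       1/s = real n / (\<epsilon> n * P' n (1 - \<epsilon> n) + P n (1 - \<epsilon> n)))"
      using s1 S unfolding Sol_def by blast
  next
    fix z assume "z > 1 \<and> (\<exists>\<epsilon>. \<epsilon> 1 = 1 \<and>
       (\<forall>j\<in>{1..n-1}.
          P' n (1 - \<epsilon> (j+1)) - P' n (1 - \<epsilon> j)
            = \<epsilon> (j+1) * P' n (1 - \<epsilon> (j+1)) + P n (1 - \<epsilon> (j+1)) - real j / z) \<and>
       0 \<le> \<epsilon> n \<and>
       (\<forall>j\<in>{1..n-1}. \<epsilon> (j+1) < \<epsilon> j) \<and>
       z = real n / (\<epsilon> n * P' n (1 - \<epsilon> n) + P n (1 - \<epsilon> n)))"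
    then obtain e' where z: "z > 1" and S': "Sol n z e'" unfolding Sol_def by blast
    show "z = 1/s"
    proof (rule ccontr)
      assume "z \<noteq> 1/s"
      then have "1/z \<noteq> 1/(1/s)" by (metis divide_divide_eq_right div_by_1 mult.left_neutral)
      then have "1/z < 1/(1/s) \<or> 1/(1/s) < 1/z" by linarith
      then show False using uniq2[OF n S' z S s1] uniq2[OF n S s1 S' z] by blast
    qed
  qed
qed

end
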